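(* Let $A,B$ be real symmetric $n\times n$ matrices, $f,g\in\mathbb{R}^n$, $\mu\in\mathbb{R}$, let $G(x)=x^TBx-2g^Tx$, and consider the problem (QP1QC): $\inf\, x^TAx-2f^Tx$ subject to $G(x)\le\mu$. Suppose the primal Slater condition holds (there exists $x_0$ with $G(x_0)<\mu$) and the optimal value of (QP1QC) is finite. Then the infimum of (QP1QC) is not attained if and only if $I_{\succeq}(A,B)=\{\sigma\in\mathbb{R}: A+\sigma B\succeq 0\}$ is a single-point set $\{\sigma^*\}$ with $\sigma^*\ge 0$ and the system in $y$ $$G\big((A+\sigma^*B)^+(f+\sigma^*g)+Vy\big)=\mu\ \text{ if } \sigma^*>0,\qquad G\big(A^+f+Vy\big)\le\mu\ \text{ if } \sigma^*=0,$$ has no solution $y$, where $V$ is a matrix whose columns form a basis of the null space $N(A+\sigma^*B)$.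
   Context: $M^+$ denotes the Moore–Penrose pseudoinverse of $M$; $M\succeq 0$ means positive semidefinite; $N(M)=\{v: Mv=0\}$. *)

theory Defs
  imports "HOL-Analysis.Analysis"
begin

definition symmetric_mat :: "real^'n^'n \<Rightarrow> bool" where
  "symmetric_mat M \<longleftrightarrow> transpose M = M"

definition psd :: "real^'n^'n \<Rightarrow> bool" where
  "psd M \<longleftrightarrow> (\<forall>x. x \<bullet> (M *v x) \<ge> 0)"

definition pinv :: "real^'n^'m \<Rightarrow> real^'m^'n" where
  "pinv M = (THE X. M ** X ** M = M \<and> X ** M ** X = X \<and>
                    transpose (M ** X) = M ** X \<and> transpose (X ** M) = X ** M)"

definition null_space :: "real^'n^'m \<Rightarrow> (real^'n) set" where
  "null_space M = {v. M *v v = 0}"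

definition quad_fun :: "real^'n^'n \<Rightarrow> real^'n \<Rightarrow> real^'n \<Rightarrow> real" where
  "quad_fun M h x = x \<bullet> (M *v x) - 2 * (h \<bullet> x)"

definition I_psd :: "real^'n^'n \<Rightarrow> real^'n^'n \<Rightarrow> real set" where
  "I_psd A B = {\<sigma>. psd (A + \<sigma> *\<^sub>R B)}"

end

theory Submission
  imports Defs
begin
lemma sym_inner:
  fixes M :: "real^'n^'n"
  assumes "symmetric_mat M"
  shows "x \<bullet> (M *v y) = (M *v x) \<bullet> y"
proof -
  have "x \<bullet> (M *v y) = (x v* M) \<bullet> y" by (simp add: dot_lmul_matrix)
  also have "x v* M = transpose M *v x" by simp
  also have "\<dots> = M *v x" using assms by (simp add: symmetric_mat_def)
  finally show ?thesis .
qed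

lemma quad_add:
  fixes M :: "real^'n^'n"
  assumes "symmetric_mat M"
  shows "quad_fun M h (x + t *\<^sub>R d) = quad_fun M h x + 2*t*((M *v x - h) \<bullet> d) + t^2 * (d \<bullet> (M *v d))"
proof -
  have s: "d \<bullet> (M *v x) = (M *v d) \<bullet> x" "x \<bullet> (M *v d) = (M *v x) \<bullet> d"
    using sym_inner[OF assms] by auto
  have s3: "(M *v d) \<bullet> x = (M *v x) \<bullet> d"
    by (metis sym_inner[OF assms] inner_commute)
  show ?thesis
    unfolding quad_fun_def
    by (simp add: matrix_vector_right_distrib matrix_vector_mult_scaleR inner_add_left inner_add_right
        inner_diff_left power2_eq_square algebra_simps s s3)
qed

lemma quad_comb:
  "quad_fun (A + s *\<^sub>R B) (f + s *\<^sub>R g) x = quad_fun A f x + s * quad_fun B g x"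
  unfolding quad_fun_def
  by (simp add: matrix_vector_mult_add_rdistrib scaleR_matrix_vector_assoc[symmetric] inner_add_right inner_add_left algebra_simps)

lemma transpose_add: "transpose (A + B) = transpose A + transpose (B::real^'n^'m)"
  by (simp add: transpose_def vec_eq_iff)

lemma sym_comb:
  assumes "symmetric_mat A" "symmetric_mat B"
  shows "symmetric_mat (A + s *\<^sub>R B)"
  using assms by (simp add: symmetric_mat_def transpose_add transpose_scalar)

lemma lin_quad_zero:
  fixes a b :: real
  assumes "\<And>t. 2*t*a + t^2*b \<ge> 0"
  shows "a = 0"
proof (rule ccontr)
  assume "a \<noteq> 0"
  define e where "e = 1 / (\<bar>b\<bar> + 1)"
  have e0: "e > 0" by (simp add: e_def)
  have eb: "e * b < 1"
  proof -
    have "e * b \<le> e * \<bar>b\<bar>" using e0 by (simp add: mult_left_mono)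
    also have "\<dots> < 1" unfolding e_def by (simp add: field_simps)
    finally show ?thesis .
  qed
  have "2*(-a*e)*a + (-a*e)^2*b = a^2 * e * (e*b - 2)"
    by (simp add: power2_eq_square algebra_simps)
  also have "\<dots> < 0"
  proof -
    have "a^2 > 0" using \<open>a \<noteq> 0\<close> by simp
    then have "a^2 * e > 0" using e0 by simp
    moreover have "e*b - 2 < 0" using eb by simp
    ultimately show ?thesis by (simp add: mult_pos_neg)
  qed
  finally show False using assms[of "-a*e"] by simp
qed

lemma psd_zero:
  fixes M :: "real^'n^'n"
  assumes "symmetric_mat M" "psd M" "x \<bullet> (M *v x) = 0"
  shows "M *v x = 0"
proof -
  have "\<And>t. 2*t*((M *v x) \<bullet> d) + t^2*(d \<bullet> (M *v d)) \<ge> 0" for d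
  proof -
    fix t
    have "(x + t *\<^sub>R d) \<bullet> (M *v (x + t *\<^sub>R d)) \<ge> 0" using assms(2) by (simp add: psd_def)
    moreover have "quad_fun M 0 (x + t *\<^sub>R d) = quad_fun M 0 x + 2*t*((M *v x - 0) \<bullet> d) + t^2 * (d \<bullet> (M *v d))"
      by (rule quad_add[OF assms(1)])
    ultimately show "2*t*((M *v x) \<bullet> d) + t^2*(d \<bullet> (M *v d)) \<ge> 0"
      using assms(3) by (simp add: quad_fun_def)
  qed
  then have "(M *v x) \<bullet> (M *v x) = 0" using lin_quad_zero by blast
  then show ?thesis by simp
qed

lemma quad_min:
  fixes M :: "real^'n^'n"
  assumes "symmetric_mat M" "psd M" "M *v x = h"
  shows "quad_fun M h x \<le> quad_fun M h y"
proof -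
  have "quad_fun M h (x + 1 *\<^sub>R (y - x)) = quad_fun M h x + 2*1*((M *v x - h) \<bullet> (y-x)) + 1^2 * ((y-x) \<bullet> (M *v (y-x)))"
    by (rule quad_add[OF assms(1)])
  moreover have "(y-x) \<bullet> (M *v (y-x)) \<ge> 0" using assms(2) by (simp add: psd_def)
  ultimately show ?thesis using assms(3) by simp
qed

lemma grad_zero:
  fixes M :: "real^'n^'n"
  assumes "symmetric_mat M" "\<And>y. quad_fun M h x \<le> quad_fun M h y"
  shows "M *v x = h"
proof -
  let ?d = "M *v x - h"
  have "\<And>t. 2*t*(?d \<bullet> ?d) + t^2*(?d \<bullet> (M *v ?d)) \<ge> 0"
  proof -
    fix t
    have "quad_fun M h (x + t *\<^sub>R ?d) = quad_fun M h x + 2*t*(?d \<bullet> ?d) + t^2 * (?d \<bullet> (M *v ?d))"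
      by (rule quad_add[OF assms(1)])
    with assms(2)[of "x + t *\<^sub>R ?d"] show "2*t*(?d \<bullet> ?d) + t^2*(?d \<bullet> (M *v ?d)) \<ge> 0" by simp
  qed
  then have "?d \<bullet> ?d = 0" by (rule lin_quad_zero)
  then show ?thesis by simp
qed
definition penrose :: "real^'n^'m \<Rightarrow> real^'m^'n \<Rightarrow> bool" where
  "penrose M X \<longleftrightarrow> M ** X ** M = M \<and> X ** M ** X = X \<and>
                    transpose (M ** X) = M ** X \<and> transpose (X ** M) = X ** M"

lemma penrose_unique:
  assumes "penrose M X" "penrose M Y"
  shows "X = Y"
proof -
  have x1: "M ** X ** M = M" and x2: "X ** M ** X = X" and x3: "transpose (M ** X) = M ** X"
    and x4: "transpose (X ** M) = X ** M" using assms(1) by (auto simp: penrose_def)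
  have y1: "M ** Y ** M = M" and y2: "Y ** M ** Y = Y" and y3: "transpose (M ** Y) = M ** Y"
    and y4: "transpose (Y ** M) = Y ** M" using assms(2) by (auto simp: penrose_def)
  have "X = X ** (M ** X)" using x2 by (simp add: matrix_mul_assoc)
  also have "\<dots> = X ** transpose (M ** X)" using x3 by simp
  also have "\<dots> = X ** (transpose X ** transpose M)" by (simp add: matrix_transpose_mul)
  also have "transpose M = transpose (M ** Y ** M)" using y1 by simp
  also have "\<dots> = transpose M ** transpose (M ** Y)" by (simp add: matrix_transpose_mul)
  also have "\<dots> = transpose M ** (M ** Y)" using y3 by simp
  also have "X ** (transpose X ** (transpose M ** (M ** Y))) = X ** (transpose (M ** X) ** (M ** Y))"
    by (simp add: matrix_transpose_mul matrix_mul_assoc)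
  also have "\<dots> = (X ** M ** X) ** M ** Y" using x3 by (simp add: matrix_mul_assoc)
  also have "\<dots> = X ** M ** Y" using x2 by simp
  finally have X: "X = X ** M ** Y" .
  have "Y = (Y ** M) ** Y" using y2 by simp
  also have "\<dots> = transpose (Y ** M) ** Y" using y4 by simp
  also have "\<dots> = (transpose M ** transpose Y) ** Y" by (simp add: matrix_transpose_mul)
  also have "transpose M = transpose (M ** X ** M)" using x1 by simp
  also have "\<dots> = transpose (X ** M) ** transpose M" by (simp add: matrix_transpose_mul matrix_mul_assoc)
  also have "\<dots> = (X ** M) ** transpose M" using x4 by simp
  also have "((X ** M) ** transpose M) ** transpose Y ** Y = (X ** M) ** (transpose (Y ** M)) ** Y"
    by (simp add: matrix_transpose_mul matrix_mul_assoc)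
  also have "\<dots> = X ** M ** (Y ** M ** Y)" using y4 by (simp add: matrix_mul_assoc)
  also have "\<dots> = X ** M ** Y" using y2 by simp
  finally have Y: "Y = X ** M ** Y" .
  show ?thesis using X Y by simp
qed

lemma sym_matrix_from_inner:
  fixes C :: "real^'n^'n"
  assumes "\<And>x y. x \<bullet> (C *v y) = (C *v x) \<bullet> y"
  shows "transpose C = C"
proof -
  have "transpose C *v x = C *v x" for x
  proof -
    have "\<And>y. (transpose C *v x - C *v x) \<bullet> y = 0"
      using assms by (simp add: inner_diff_left dot_lmul_matrix)
    from this[of "transpose C *v x - C *v x"] show ?thesis by simp
  qed
  then show ?thesis by (simp add: matrix_eq)
qed

lemma pinv_exists_sym:
  fixes M :: "real^'n^'n"
  assumes sym: "symmetric_mat M"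
  shows "\<exists>X. penrose M X"
proof -
  let ?R = "range (\<lambda>z. M *v z)"
  have subR: "subspace ?R"
    by (intro linear_subspace_image subspace_UNIV matrix_vector_mul_linear)
  have spanR: "span ?R = ?R" using subR by (simp add: span_eq_iff)
  have "\<exists>p q. p \<in> ?R \<and> (\<forall>w\<in>?R. orthogonal q w) \<and> x = p + q" for x
  proof -
    obtain y z where "y \<in> span ?R" "\<And>w. w \<in> span ?R \<Longrightarrow> orthogonal z w" "x = y + z"
      using orthogonal_subspace_decomp_exists[of ?R x] by blast
    then show ?thesis unfolding spanR by blast
  qed
  then have "\<forall>x. \<exists>p q. p \<in> ?R \<and> (\<forall>w\<in>?R. orthogonal q w) \<and> x = p + q" by blast
  then obtain p q where pqall: "\<forall>x. p x \<in> ?R \<and> (\<forall>w\<in>?R. orthogonal (q x) w) \<and> x = p x + q x"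
    by (metis (no_types))
  have pR: "\<And>x. p x \<in> ?R" and qo: "\<And>x w. w \<in> ?R \<Longrightarrow> orthogonal (q x) w"
    and pq: "\<And>x. x = p x + q x" using pqall by blast+
  have orthRN: "u \<bullet> n = 0" if uR: "u \<in> ?R" and nN: "M *v n = 0" for u n
  proof -
    obtain z where "u = M *v z" using uR by blast
    then show ?thesis using sym_inner[OF sym, of z n] nN by (simp add: inner_commute)
  qed
  have qN: "M *v (q x) = 0" for x
  proof -
    have "orthogonal (q x) (M *v (M *v q x))" using qo by auto
    then have "(M *v q x) \<bullet> (M *v q x) = 0"
      using sym_inner[OF sym, of "q x" "M *v q x"] by (simp add: orthogonal_def)
    then show ?thesis by simp
  qed
  have uniqR: "u = v" if "u \<in> ?R" "v \<in> ?R" "M *v u = M *v v" for u v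
  proof -
    have "u - v \<in> ?R" using subR that by (simp add: subspace_diff)
    moreover have "M *v (u - v) = 0" using that by (simp add: matrix_vector_mult_diff_distrib)
    ultimately have "(u - v) \<bullet> (u - v) = 0" using orthRN by blast
    then show ?thesis by simp
  qed
  have Mp: "M *v p x = M *v x" for x
    using pq[of x] qN[of x] by (metis add.right_neutral matrix_vector_right_distrib)
  have p_unique: "p x = u" if "u \<in> ?R" "M *v u = M *v x" for x u
    using uniqR[OF pR that(1)] Mp that(2) by simp
  have pp: "p (p x) = p x" for x using p_unique[OF pR[of x], of "p x"] Mp by simp
  have pM: "p (M *v x) = M *v x" for x using p_unique[of "M *v x" "M *v x"] by blast
  have p_sym: "p x \<bullet> y = x \<bullet> p y" for x y
  proof -
    have "p x \<bullet> y = p x \<bullet> (p y + q y)" using pq[of y] by simp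
    also have "\<dots> = p x \<bullet> p y" using qo[OF pR[of x], of y] by (simp add: inner_add_right orthogonal_def inner_commute)
    also have "\<dots> = (p x + q x) \<bullet> p y" using qo[OF pR[of y], of x] by (simp add: inner_add_left orthogonal_def)
    finally show ?thesis using pq[of x] by simp
  qed
  define Xf where "Xf x = p (SOME z. M *v z = p x)" for x
  have XfR: "Xf x \<in> ?R" for x unfolding Xf_def by (rule pR)
  have MXf: "M *v Xf x = p x" for x
  proof -
    have "\<exists>z. M *v z = p x" using pR[of x] by auto
    then have "M *v (SOME z. M *v z = p x) = p x" by (rule someI_ex)
    then show ?thesis unfolding Xf_def using Mp by simp
  qed
  have lin_p: "linear p"
  proof
    show "p (x + y) = p x + p y" for x y
      using p_unique[of "p x + p y" "x + y"] subR pR Mp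
      by (simp add: subspace_add matrix_vector_right_distrib)
    show "p (c *\<^sub>R x) = c *\<^sub>R p x" for c x
      using p_unique[of "c *\<^sub>R p x" "c *\<^sub>R x"] subR pR Mp
      by (simp add: subspace_scale matrix_vector_mult_scaleR)
  qed
  have lin: "linear Xf"
  proof
    show "Xf (x + y) = Xf x + Xf y" for x y
      using uniqR[of "Xf (x+y)" "Xf x + Xf y"] XfR subR MXf linear_add[OF lin_p]
      by (simp add: subspace_add matrix_vector_right_distrib)
    show "Xf (c *\<^sub>R x) = c *\<^sub>R Xf x" for c x
      using uniqR[of "Xf (c *\<^sub>R x)" "c *\<^sub>R Xf x"] XfR subR MXf linear_scale[OF lin_p]
      by (simp add: subspace_scale matrix_vector_mult_scaleR)
  qed
  define X where "X = matrix Xf"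
  have Xw: "X *v x = Xf x" for x
    unfolding X_def by (rule matrix_works) (simp add: linear_matrix_vector_mul_eq lin)
  have c1: "M ** X ** M = M"
  proof -
    have "(M ** X ** M) *v x = M *v x" for x
    proof -
      have "(M ** X ** M) *v x = M *v Xf (M *v x)" by (simp add: matrix_vector_mul_assoc[symmetric] Xw)
      also have "\<dots> = p (M *v x)" by (rule MXf)
      also have "\<dots> = M *v x" by (rule pM)
      finally show ?thesis .
    qed
    then show ?thesis by (simp add: matrix_eq)
  qed
  have c2: "X ** M ** X = X"
  proof -
    have "(X ** M ** X) *v x = X *v x" for x
    proof -
      have "(X ** M ** X) *v x = Xf (p x)" by (simp add: matrix_vector_mul_assoc[symmetric] Xw MXf)
      also have "\<dots> = Xf x"
        using uniqR[OF XfR XfR, of "p x" x] MXf pp by simp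
      finally show ?thesis by (simp add: Xw)
    qed
    then show ?thesis by (simp add: matrix_eq)
  qed
  have MX: "(M ** X) *v x = p x" for x by (simp add: matrix_vector_mul_assoc[symmetric] Xw MXf)
  have XM: "(X ** M) *v x = p x" for x
  proof -
    have "(X ** M) *v x = Xf (M *v x)" by (simp add: matrix_vector_mul_assoc[symmetric] Xw)
    also have "\<dots> = p x" using p_unique[OF XfR[of "M *v x"], of x] MXf[of "M *v x"] pM by simp
    finally show ?thesis .
  qed
  have c3: "transpose (M ** X) = M ** X"
    by (rule sym_matrix_from_inner) (metis MX p_sym)
  have c4: "transpose (X ** M) = X ** M"
    by (rule sym_matrix_from_inner) (metis XM p_sym)
  show ?thesis using c1 c2 c3 c4 unfolding penrose_def by blast
qed

lemma pinv_penrose: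
  fixes M :: "real^'n^'n"
  assumes "symmetric_mat M"
  shows "penrose M (pinv M)"
proof -
  obtain X where X: "penrose M X" using pinv_exists_sym[OF assms] by blast
  have e: "pinv M = (THE X. penrose M X)" by (simp add: pinv_def penrose_def)
  have "pinv M = X" unfolding e
  proof (rule the_equality)
    show "penrose M X" by (rule X)
  next
    fix Y assume "penrose M Y"
    then show "Y = X" using penrose_unique[OF X] by metis
  qed
  with X show ?thesis by simp
qed

lemma pinv_facts:
  fixes M :: "real^'n^'n"
  assumes "symmetric_mat M"
  shows "M *v (pinv M *v (M *v x)) = M *v x"
    and "M *v (M *v (pinv M *v h)) = M *v h"
    and "\<exists>z. pinv M *v (M *v x) = M *v z"
proof -
  let ?X = "pinv M"
  have p: "penrose M ?X" by (rule pinv_penrose[OF assms])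
  have tM: "transpose M = M" using assms by (simp add: symmetric_mat_def)
  have x1: "M ** ?X ** M = M" and x3: "transpose (M ** ?X) = M ** ?X"
    and x4: "transpose (?X ** M) = ?X ** M" using p by (auto simp: penrose_def)
  show "M *v (?X *v (M *v x)) = M *v x"
    using x1 by (simp add: matrix_vector_mul_assoc matrix_mul_assoc)
  have "M ** (M ** ?X) = M"
  proof -
    have "M ** (M ** ?X) = transpose M ** transpose (M ** ?X)" using tM x3 by simp
    also have "\<dots> = transpose (M ** ?X ** M)" by (simp add: matrix_transpose_mul)
    also have "\<dots> = M" using x1 tM by simp
    finally show ?thesis .
  qed
  then show "M *v (M *v (?X *v h)) = M *v h" by (simp add: matrix_vector_mul_assoc)
  have "?X ** M = M ** transpose ?X"
  proof -
    have "?X ** M = transpose (?X ** M)" using x4 by simp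
    also have "\<dots> = M ** transpose ?X" using tM by (simp add: matrix_transpose_mul)
    finally show ?thesis .
  qed
  then have "?X *v (M *v x) = M *v (transpose ?X *v x)" by (metis matrix_vector_mul_assoc)
  then show "\<exists>z. ?X *v (M *v x) = M *v z" by blast
qed

lemma lin_bdd_zero:
  fixes c K :: real
  assumes "\<And>t. K \<le> -2*t*c"
  shows "c = 0"
proof (rule ccontr)
  assume "c \<noteq> 0"
  have "K \<le> -2*((\<bar>K\<bar>+1)/(2*c))*c" by (rule assms)
  also have "\<dots> = -(\<bar>K\<bar>+1)" using \<open>c \<noteq> 0\<close> by (simp add: field_simps)
  finally show False by simp
qed

lemma range_from_bdd:
  fixes M :: "real^'n^'n"
  assumes sym: "symmetric_mat M" and bdd: "\<And>x. K \<le> quad_fun M h x"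
  shows "M *v (pinv M *v h) = h"
proof -
  let ?n = "h - M *v (pinv M *v h)"
  have Mn: "M *v ?n = 0"
    using pinv_facts(2)[OF sym, of h] by (simp add: matrix_vector_mult_diff_distrib)
  have "K \<le> -2*t*(h \<bullet> ?n)" for t
    using bdd[of "t *\<^sub>R ?n"] Mn by (simp add: quad_fun_def matrix_vector_mult_scaleR)
  then have hn: "h \<bullet> ?n = 0" by (rule lin_bdd_zero)
  have "(M *v (pinv M *v h)) \<bullet> ?n = 0"
    using sym_inner[OF sym, of "pinv M *v h" ?n] Mn by (simp add: inner_commute)
  then have "?n \<bullet> ?n = 0" using hn by (simp add: inner_diff_left)
  then show ?thesis by simp
qed

lemma coercive_range:
  fixes M :: "real^'n^'n"
  assumes sym: "symmetric_mat M" and ps: "psd M"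
  shows "\<exists>c>0. \<forall>z. c * ((M *v z) \<bullet> (M *v z)) \<le> (M *v z) \<bullet> (M *v (M *v z))"
proof -
  let ?R = "range (\<lambda>z. M *v z)"
  have subR: "subspace ?R"
    by (intro linear_subspace_image subspace_UNIV matrix_vector_mul_linear)
  let ?S = "sphere 0 1 \<inter> ?R"
  have cS: "compact ?S"
    by (intro compact_Int_closed compact_sphere closed_subspace subR)
  have pos: "y \<bullet> (M *v y) > 0" if yS: "y \<in> ?S" for y
  proof -
    obtain z where yz: "y = M *v z" using yS by blast
    have "y \<bullet> (M *v y) \<ge> 0" using ps by (simp add: psd_def)
    moreover have "y \<bullet> (M *v y) \<noteq> 0"
    proof
      assume "y \<bullet> (M *v y) = 0"
      then have "M *v y = 0" by (rule psd_zero[OF sym ps])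
      then have "y \<bullet> y = 0" using sym_inner[OF sym, of z y] yz by (simp add: inner_commute)
      then show False using yS by simp
    qed
    ultimately show ?thesis by simp
  qed
  show ?thesis
  proof (cases "?S = {}")
    case True
    have "M *v z = 0" for z
    proof (rule ccontr)
      assume ne: "M *v z \<noteq> 0"
      have "(1 / norm (M *v z)) *\<^sub>R (M *v z) \<in> ?R"
        by (metis rangeI matrix_vector_mult_scaleR)
      moreover have "norm ((1 / norm (M *v z)) *\<^sub>R (M *v z)) = 1" using ne by simp
      ultimately have "(1 / norm (M *v z)) *\<^sub>R (M *v z) \<in> ?S" by simp
      then show False using True by blast
    qed
    then show ?thesis by (intro exI[of _ 1]) simp
  next
    case False
    have "continuous_on ?S (\<lambda>y. y \<bullet> (M *v y))" by (intro continuous_intros)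
    then obtain y0 where y0: "y0 \<in> ?S" and mn: "\<And>y. y \<in> ?S \<Longrightarrow> y0 \<bullet> (M *v y0) \<le> y \<bullet> (M *v y)"
      using continuous_attains_inf[OF cS False] by blast
    define c where "c = y0 \<bullet> (M *v y0)"
    have c0: "c > 0" using pos[OF y0] by (simp add: c_def)
    have "c * ((M *v z) \<bullet> (M *v z)) \<le> (M *v z) \<bullet> (M *v (M *v z))" for z
    proof (cases "M *v z = 0")
      case True then show ?thesis by simp
    next
      case False
      define r where "r = norm (M *v z)"
      have r0: "r > 0" using False by (simp add: r_def)
      define u where "u = (1/r) *\<^sub>R (M *v z)"
      have "u \<in> ?R" unfolding u_def by (metis rangeI matrix_vector_mult_scaleR)
      moreover have "norm u = 1" unfolding u_def r_def using False by simp
      ultimately have "u \<in> ?S" by simp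
      then have "c \<le> u \<bullet> (M *v u)" using mn by (simp add: c_def)
      also have "u \<bullet> (M *v u) = ((M *v z) \<bullet> (M *v (M *v z))) / r^2"
        unfolding u_def by (simp add: matrix_vector_mult_scaleR power2_eq_square)
      finally have "c * r^2 \<le> (M *v z) \<bullet> (M *v (M *v z))" using r0 by (simp add: field_simps)
      moreover have "r^2 = (M *v z) \<bullet> (M *v z)" by (simp add: r_def dot_square_norm)
      ultimately show ?thesis by simp
    qed
    then show ?thesis using c0 by blast
  qed
qed

lemma S_hom:
  fixes P Q :: "'v::real_vector \<Rightarrow> real"
  assumes line: "\<And>z w. \<exists>b c. \<forall>t. P (z + t *\<^sub>R w) = P z + 2*t*b + t^2 * P w \<and>
                                Q (z + t *\<^sub>R w) = Q z + 2*t*c + t^2 * Q w"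
    and sl: "Q w0 < 0" and imp: "\<And>z. Q z \<le> 0 \<Longrightarrow> 0 \<le> P z"
  shows "\<exists>\<sigma>\<ge>0. \<forall>z. 0 \<le> P z + \<sigma> * Q z"
proof -
  have key: "0 \<le> P z * (- Q w) + P w * Q z" if qz: "Q z > 0" and qw: "Q w < 0" for z w
  proof (rule ccontr)
    assume neg: "\<not> 0 \<le> P z * (- Q w) + P w * Q z"
    obtain b c where bc: "\<And>t. P (z + t *\<^sub>R w) = P z + 2*t*b + t^2 * P w \<and>
                                Q (z + t *\<^sub>R w) = Q z + 2*t*c + t^2 * Q w"
      using line[of z w] by blast
    define q where "q = - Q w"
    define a where "a = Q z"
    have q0: "q > 0" and a0: "a > 0" using qz qw by (auto simp: q_def a_def)
    define \<tau> where "\<tau> = P w / q"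
    define e where "e = b + \<tau> * c"
    define s where "s = sqrt (c^2 + a*q)"
    have "0 \<le> a*q" using a0 q0 by simp
    then have cq: "0 \<le> c^2 + a*q" using zero_le_power2[of c] by linarith
    have s2: "s^2 = c^2 + a*q" unfolding s_def using cq by simp
    have s0: "s \<ge> 0" unfolding s_def using cq by simp
    have sc: "\<bar>c\<bar> < s"
    proof -
      have "c^2 < s^2" using s2 a0 q0 by simp
      then show ?thesis using power2_less_imp_less[of "\<bar>c\<bar>" s] s0 by simp
    qed
    define t where "t = (if e \<ge> 0 then (c - s)/q else (c + s)/q)"
    have te: "t * e \<le> 0"
    proof (cases "e \<ge> 0")
      case True
      then have "t = (c - s)/q" by (simp add: t_def)
      moreover have "c - s < 0" using sc by linarith
      ultimately have "t < 0" using q0 by (simp add: divide_neg_pos)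
      then show ?thesis using True by (simp add: mult_nonpos_nonneg)
    next
      case False
      then have "t = (c + s)/q" by (simp add: t_def)
      moreover have "c + s > 0" using sc by linarith
      ultimately have "t > 0" using q0 by simp
      then show ?thesis using False mult_pos_neg[of t e] by simp
    qed
    have tq: "t*q = c - s \<or> t*q = c + s" unfolding t_def using q0 by auto
    have Qt: "a + 2*t*c - q*t^2 = 0"
    proof -
      have "q * (a + 2*t*c - q*t^2) = a*q + 2*c*(t*q) - (t*q)^2" by (simp add: power2_eq_square algebra_simps)
      also have "\<dots> = 0"
      proof -
        have "a*q + 2*c*u - u^2 = 0" if "u = c - s \<or> u = c + s" for u
          using that s2 by (auto simp: power2_eq_square algebra_simps)
        then show ?thesis using tq by blast
      qed
      finally show ?thesis using q0 by simp
    qed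
    have Qu: "Q (z + t *\<^sub>R w) = 0" using bc[of t] Qt by (simp add: q_def a_def mult.commute)
    have Pw: "P w = \<tau> * q" unfolding \<tau>_def using q0 by simp
    have "P (z + t *\<^sub>R w) = (P z + \<tau>*a) + 2*t*e - \<tau>*(a + 2*t*c - q*t^2)"
      using bc[of t] Pw by (simp add: e_def algebra_simps)
    also have "\<dots> = (P z + \<tau>*a) + 2*t*e" using Qt by simp
    also have "P z + \<tau>*a = (P z * q + P w * a) / q" unfolding \<tau>_def using q0 by (simp add: field_simps)
    also have "\<dots> < 0"
    proof -
      have "P z * q + P w * a < 0" using neg by (simp add: q_def a_def)
      then show ?thesis using q0 by (simp add: divide_neg_pos)
    qed
    finally have "P (z + t *\<^sub>R w) < 0" using te by simp
    moreover have "0 \<le> P (z + t *\<^sub>R w)" using imp Qu by simp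
    ultimately show False by simp
  qed
  define S where "S = {- P z / Q z | z. Q z > 0}"
  show ?thesis
  proof (cases "S = {}")
    case True
    have "0 \<le> P z + 0 * Q z" for z
    proof (cases "Q z > 0")
      case True then have "- P z / Q z \<in> S" unfolding S_def by blast
      with \<open>S = {}\<close> show ?thesis by simp
    next
      case False then show ?thesis using imp by simp
    qed
    then show ?thesis by (intro exI[of _ 0]) simp
  next
    case False
    have ub: "s \<le> P w / (- Q w)" if sS: "s \<in> S" and qw: "Q w < 0" for s w
    proof -
      obtain z where z: "s = - P z / Q z" "Q z > 0" using sS unfolding S_def by blast
      have "0 \<le> P z * (- Q w) + P w * Q z" using key[OF z(2) qw] .
      then have h1: "P z * Q w \<le> P w * Q z" by simp
      have "s * Q z = - P z" using z by simp
      moreover have "(s * (- Q w)) * Q z = - (s * Q z) * Q w" by (simp add: algebra_simps)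
      ultimately have "(s * (- Q w)) * Q z = P z * Q w" by simp
      then have "(s * (- Q w)) * Q z \<le> P w * Q z" using h1 by simp
      then have "s * (- Q w) \<le> P w" using z(2) by (rule mult_right_le_imp_le)
      moreover have "- Q w > 0" using qw by simp
      ultimately show ?thesis by (simp only: pos_le_divide_eq)
    qed
    have bdd: "bdd_above S" using ub sl unfolding bdd_above_def by blast
    define \<sigma> where "\<sigma> = max 0 (Sup S)"
    have "0 \<le> P z + \<sigma> * Q z" for z
    proof (cases "Q z > 0")
      case True
      then have "- P z / Q z \<in> S" unfolding S_def by blast
      then have "- P z / Q z \<le> Sup S" using cSup_upper[OF _ bdd] by blast
      then have "- P z / Q z \<le> \<sigma>" unfolding \<sigma>_def by linarith
      then show ?thesis using True by (simp add: field_simps)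
    next
      case nq: False
      show ?thesis
      proof (cases "Q z = 0")
        case True then show ?thesis using imp by simp
      next
        case False
        then have qn: "Q z < 0" using nq by simp
        have "Sup S \<le> P z / (- Q z)" using cSup_least[OF \<open>S \<noteq> {}\<close>] ub qn by blast
        moreover have "0 \<le> P z / (- Q z)" using imp[of z] qn by (simp add: divide_nonneg_neg)
        ultimately have "\<sigma> \<le> P z / (- Q z)" unfolding \<sigma>_def by simp
        then have "\<sigma> * (- Q z) \<le> P z" using qn by (simp add: field_simps)
        then show ?thesis by simp
      qed
    qed
    moreover have "\<sigma> \<ge> 0" unfolding \<sigma>_def by simp
    ultimately show ?thesis by blast
  qed
qed

lemma quad_add_gen:
  "quad_fun M h (x0 + t *\<^sub>R x) = quad_fun M h x0 + t*(x0 \<bullet> (M *v x) + x \<bullet> (M *v x0) - 2*(h \<bullet> x)) + t^2*(x \<bullet> (M *v x))"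
  unfolding quad_fun_def
  by (simp add: matrix_vector_right_distrib matrix_vector_mult_scaleR inner_add_left inner_add_right
        power2_eq_square algebra_simps)

lemma quad_pos_lead:
  fixes a b c :: real
  assumes "\<And>T. T > 0 \<Longrightarrow> 0 \<le> a + b*T + c*T^2"
  shows "0 \<le> c"
proof (rule ccontr)
  assume "\<not> 0 \<le> c"
  then have c0: "0 < - c" by simp
  define K where "K = \<bar>a\<bar> + \<bar>b\<bar> + 1"
  define T where "T = max 1 (K / (-c))"
  have T1: "1 \<le> T" unfolding T_def by simp
  have T0: "0 \<le> T" using T1 by simp
  have "K / (-c) \<le> T" unfolding T_def by simp
  then have "K \<le> T * (-c)" by (simp only: pos_divide_le_eq[OF c0])
  then have cT: "c * T \<le> - K" by (simp add: algebra_simps)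
  have "\<bar>a\<bar> * 1 \<le> \<bar>a\<bar> * T" using T1 by (intro mult_left_mono) auto
  then have h1: "a \<le> \<bar>a\<bar> * T" by linarith
  have h2: "b*T \<le> \<bar>b\<bar>*T" using T0 by (intro mult_right_mono) auto
  have h3: "c*T^2 = (c*T)*T" by (simp add: power2_eq_square)
  have h4: "(c*T)*T \<le> (- K) * T" using cT T0 by (intro mult_right_mono) auto
  have "a + b*T + c*T^2 \<le> \<bar>a\<bar>*T + \<bar>b\<bar>*T + (- K) * T" using h1 h2 h3 h4 by linarith
  also have "\<dots> = - T" by (simp add: K_def algebra_simps)
  finally have "a + b*T + c*T^2 \<le> - T" .
  then show False using assms[of T] T1 by simp
qed

lemma S_lemma:
  fixes A B :: "real^'n^'n" and f g :: "real^'n"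
  assumes sl: "quad_fun B g x0 < \<mu>"
    and feas: "\<And>x. quad_fun B g x \<le> \<mu> \<Longrightarrow> \<gamma> \<le> quad_fun A f x"
  shows "\<exists>\<sigma>\<ge>0. psd (A + \<sigma> *\<^sub>R B) \<and> (\<forall>x. \<gamma> \<le> quad_fun A f x + \<sigma> * (quad_fun B g x - \<mu>))"
proof -
  define P :: "(real^'n) \<times> real \<Rightarrow> real" where
    "P z = fst z \<bullet> (A *v fst z) - 2 * snd z * (f \<bullet> fst z) - \<gamma> * (snd z)^2" for z
  define Q :: "(real^'n) \<times> real \<Rightarrow> real" where
    "Q z = fst z \<bullet> (B *v fst z) - 2 * snd z * (g \<bullet> fst z) - \<mu> * (snd z)^2" for z
  have expand: "fst (z + t *\<^sub>R w) \<bullet> (M *v fst (z + t *\<^sub>R w)) =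
      fst z \<bullet> (M *v fst z) + t * (fst z \<bullet> (M *v fst w) + fst w \<bullet> (M *v fst z)) + t^2 * (fst w \<bullet> (M *v fst w))"
    for M :: "real^'n^'n" and z w :: "(real^'n) \<times> real" and t
    using quad_add_gen[of M 0 "fst z" t "fst w"] by (simp add: quad_fun_def)
  have alg: "(X0 + t * X1 + t^2 * X2) - 2 * (u + t * v) * (F0 + t * F1) - c * (u + t * v)^2 =
     (X0 - 2 * u * F0 - c * u^2) + 2 * t * (X1/2 - u * F1 - v * F0 - c * u * v) + t^2 * (X2 - 2 * v * F1 - c * v^2)"
    for X0 X1 X2 u v F0 F1 c t :: real
    by (simp add: power2_eq_square algebra_simps)
  have line: "\<exists>b c. \<forall>t. P (z + t *\<^sub>R w) = P z + 2*t*b + t^2 * P w \<and>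
                      Q (z + t *\<^sub>R w) = Q z + 2*t*c + t^2 * Q w" for z w
  proof (intro exI allI conjI)
    fix t
    have fa: "f \<bullet> fst (z + t *\<^sub>R w) = f \<bullet> fst z + t * (f \<bullet> fst w)" by (simp add: inner_add_right)
    have ga: "g \<bullet> fst (z + t *\<^sub>R w) = g \<bullet> fst z + t * (g \<bullet> fst w)" by (simp add: inner_add_right)
    have sa: "snd (z + t *\<^sub>R w) = snd z + t * snd w" by simp
    show "P (z + t *\<^sub>R w) = P z + 2*t*((fst z \<bullet> (A *v fst w) + fst w \<bullet> (A *v fst z))/2
        - snd z * (f \<bullet> fst w) - snd w * (f \<bullet> fst z) - \<gamma> * snd z * snd w) + t^2 * P w"
      unfolding P_def expand fa sa alg by (simp only: mult.assoc)
    show "Q (z + t *\<^sub>R w) = Q z + 2*t*((fst z \<bullet> (B *v fst w) + fst w \<bullet> (B *v fst z))/2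
        - snd z * (g \<bullet> fst w) - snd w * (g \<bullet> fst z) - \<mu> * snd z * snd w) + t^2 * Q w"
      unfolding Q_def expand ga sa alg by (simp only: mult.assoc)
  qed
  have slz: "Q (x0, 1) < 0" using sl by (simp add: Q_def quad_fun_def)
  have imp: "0 \<le> P z" if qz: "Q z \<le> 0" for z
  proof (cases "snd z = 0")
    case False
    define s where "s = snd z"
    define x where "x = fst z"
    define y where "y = (1/s) *\<^sub>R x"
    have s0: "s \<noteq> 0" using False by (simp add: s_def)
    have xy: "x = s *\<^sub>R y" using s0 by (simp add: y_def)
    have Qe: "Q z = s^2 * (quad_fun B g y - \<mu>)"
      unfolding Q_def quad_fun_def x_def[symmetric] s_def[symmetric] xy
      by (simp add: matrix_vector_mult_scaleR power2_eq_square algebra_simps)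
    have Pe: "P z = s^2 * (quad_fun A f y - \<gamma>)"
      unfolding P_def quad_fun_def x_def[symmetric] s_def[symmetric] xy
      by (simp add: matrix_vector_mult_scaleR power2_eq_square algebra_simps)
    have s2: "s^2 > 0" using s0 by simp
    have "quad_fun B g y \<le> \<mu>" using qz Qe s2 by (simp add: mult_le_0_iff)
    then have "\<gamma> \<le> quad_fun A f y" by (rule feas)
    then show ?thesis using Pe s2 by simp
  next
    case True
    define x where "x = fst z"
    have Qz: "Q z = x \<bullet> (B *v x)" and Pz: "P z = x \<bullet> (A *v x)" using True by (simp_all add: Q_def P_def x_def)
    define \<beta> where "\<beta> = x0 \<bullet> (B *v x) + x \<bullet> (B *v x0) - 2*(g \<bullet> x)"
    define \<alpha> where "\<alpha> = x0 \<bullet> (A *v x) + x \<bullet> (A *v x0) - 2*(f \<bullet> x)"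
    define sg :: real where "sg = (if \<beta> \<ge> 0 then -1 else 1)"
    have "0 \<le> (quad_fun A f x0 - \<gamma>) + \<bar>\<alpha>\<bar>*T + (x \<bullet> (A *v x))*T^2" if T0: "T > 0" for T
    proof -
      let ?t = "sg * T"
      have tb: "?t * \<beta> \<le> 0"
      proof (cases "\<beta> \<ge> 0")
        case True
        then have "0 \<le> T * \<beta>" using T0 by simp
        then show ?thesis using True by (simp add: sg_def)
      next
        case False
        then have "T * \<beta> < 0" using T0 mult_pos_neg[of T \<beta>] by simp
        then show ?thesis using False by (simp add: sg_def)
      qed
      have t2: "?t^2 = T^2" unfolding sg_def by (simp add: power2_eq_square)
      have "quad_fun B g (x0 + ?t *\<^sub>R x) = quad_fun B g x0 + ?t*\<beta> + T^2*(x \<bullet> (B *v x))"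
        using quad_add_gen[of B g x0 ?t x] t2 by (simp add: \<beta>_def)
      also have "\<dots> \<le> quad_fun B g x0"
      proof -
        have "T^2*(x \<bullet> (B *v x)) \<le> 0" using qz Qz by (simp add: mult_nonneg_nonpos)
        then show ?thesis using tb by linarith
      qed
      finally have "quad_fun B g (x0 + ?t *\<^sub>R x) \<le> \<mu>" using sl by simp
      then have "\<gamma> \<le> quad_fun A f (x0 + ?t *\<^sub>R x)" by (rule feas)
      also have "\<dots> = quad_fun A f x0 + ?t*\<alpha> + T^2*(x \<bullet> (A *v x))"
        using quad_add_gen[of A f x0 ?t x] t2 by (simp add: \<alpha>_def)
      also have "?t*\<alpha> \<le> \<bar>\<alpha>\<bar>*T"
      proof -
        have "?t*\<alpha> \<le> \<bar>?t*\<alpha>\<bar>" by simp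
        also have "\<dots> = \<bar>\<alpha>\<bar>*T" using T0 unfolding sg_def by (simp add: abs_mult)
        finally show ?thesis .
      qed
      finally show ?thesis by (simp add: algebra_simps)
    qed
    then have "0 \<le> x \<bullet> (A *v x)" by (rule quad_pos_lead)
    then show ?thesis using Pz by simp
  qed
  have ex: "\<exists>\<sigma>\<ge>0. \<forall>z. 0 \<le> P z + \<sigma> * Q z" by (rule S_hom[OF line slz imp])
  then obtain \<sigma> where s0: "\<sigma> \<ge> 0" and all0: "\<forall>z. 0 \<le> P z + \<sigma> * Q z" by blast
  have all: "0 \<le> P z + \<sigma> * Q z" for z using all0 by blast
  have "psd (A + \<sigma> *\<^sub>R B)" unfolding psd_def
  proof
    fix x
    have "0 \<le> P (x, 0) + \<sigma> * Q (x, 0)" by (rule all)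
    moreover have "P (x, 0) = x \<bullet> (A *v x)" "Q (x, 0) = x \<bullet> (B *v x)" by (simp_all add: P_def Q_def)
    moreover have "x \<bullet> ((A + \<sigma> *\<^sub>R B) *v x) = x \<bullet> (A *v x) + \<sigma> * (x \<bullet> (B *v x))"
      by (simp add: matrix_vector_mult_add_rdistrib scaleR_matrix_vector_assoc[symmetric] inner_add_right)
    ultimately show "0 \<le> x \<bullet> ((A + \<sigma> *\<^sub>R B) *v x)" by simp
  qed
  moreover have "\<gamma> \<le> quad_fun A f x + \<sigma> * (quad_fun B g x - \<mu>)" for x
  proof -
    have "0 \<le> P (x, 1) + \<sigma> * Q (x, 1)" by (rule all)
    moreover have "P (x, 1) = quad_fun A f x - \<gamma>" "Q (x, 1) = quad_fun B g x - \<mu>"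
      by (simp_all add: P_def Q_def quad_fun_def)
    ultimately show ?thesis by simp
  qed
  ultimately show ?thesis using s0 by blast
qed

lemma shift_inv:
  fixes A :: "real^'n^'n"
  assumes "symmetric_mat A" "A *v n = 0" "f \<bullet> n = 0"
  shows "quad_fun A f (x + t *\<^sub>R n) = quad_fun A f x"
proof -
  have "(A *v x) \<bullet> n = 0" using sym_inner[OF assms(1), of x n] assms(2) by simp
  then show ?thesis using quad_add[OF assms(1), of f x t n] assms(2,3) by (simp add: inner_diff_left)
qed

lemma KKT_attain:
  fixes A B :: "real^'n^'n" and f g :: "real^'n"
  assumes symA: "symmetric_mat A" and symB: "symmetric_mat B"
    and bdd: "bdd_below (quad_fun A f ` {x. quad_fun B g x \<le> \<mu>})"
    and ps: "psd (A + \<sigma> *\<^sub>R B)" and s0: "\<sigma> \<ge> 0"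
    and Mx: "(A + \<sigma> *\<^sub>R B) *v x = f + \<sigma> *\<^sub>R g"
    and Gx: "quad_fun B g x \<le> \<mu>" and cs: "\<sigma> * (quad_fun B g x - \<mu>) = 0"
  shows "\<exists>x. quad_fun B g x \<le> \<mu> \<and>
              quad_fun A f x = (INF z\<in>{x. quad_fun B g x \<le> \<mu>}. quad_fun A f z)"
proof (intro exI conjI)
  show "quad_fun B g x \<le> \<mu>" by (rule Gx)
  have symM: "symmetric_mat (A + \<sigma> *\<^sub>R B)" by (rule sym_comb[OF symA symB])
  have le: "quad_fun A f x \<le> quad_fun A f z" if zS: "quad_fun B g z \<le> \<mu>" for z
  proof -
    have "quad_fun (A + \<sigma> *\<^sub>R B) (f + \<sigma> *\<^sub>R g) x - \<sigma> * \<mu> = quad_fun A f x + \<sigma> * (quad_fun B g x - \<mu>)"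
      by (simp add: quad_comb algebra_simps)
    then have "quad_fun A f x = quad_fun (A + \<sigma> *\<^sub>R B) (f + \<sigma> *\<^sub>R g) x - \<sigma> * \<mu>"
      using cs by simp
    also have "\<dots> \<le> quad_fun (A + \<sigma> *\<^sub>R B) (f + \<sigma> *\<^sub>R g) z - \<sigma> * \<mu>"
      using quad_min[OF symM ps Mx] by simp
    also have "\<dots> = quad_fun A f z + \<sigma> * (quad_fun B g z - \<mu>)" by (simp add: quad_comb algebra_simps)
    also have "\<dots> \<le> quad_fun A f z"
    proof -
      have "\<sigma> * (quad_fun B g z - \<mu>) \<le> 0" using s0 zS by (simp add: mult_nonneg_nonpos)
      then show ?thesis by simp
    qed
    finally show ?thesis .
  qed
  show "quad_fun A f x = (INF z\<in>{x. quad_fun B g x \<le> \<mu>}. quad_fun A f z)"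
    by (rule cInf_eq_minimum[symmetric]) (use Gx le in auto)
qed

lemma attain_KKT:
  fixes A B :: "real^'n^'n" and f g :: "real^'n"
  assumes symA: "symmetric_mat A" and symB: "symmetric_mat B"
    and s0: "\<sigma> \<ge> 0"
    and dual: "\<And>y. \<gamma> \<le> quad_fun A f y + \<sigma> * (quad_fun B g y - \<mu>)"
    and Gx: "quad_fun B g x \<le> \<mu>" and Fx: "quad_fun A f x = \<gamma>"
  shows "(A + \<sigma> *\<^sub>R B) *v x = f + \<sigma> *\<^sub>R g \<and> \<sigma> * (quad_fun B g x - \<mu>) = 0"
proof -
  have symM: "symmetric_mat (A + \<sigma> *\<^sub>R B)" by (rule sym_comb[OF symA symB])
  have np: "\<sigma> * (quad_fun B g x - \<mu>) \<le> 0" using s0 Gx by (simp add: mult_nonneg_nonpos)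
  have "\<gamma> \<le> quad_fun A f x + \<sigma> * (quad_fun B g x - \<mu>)" by (rule dual)
  then have cs: "\<sigma> * (quad_fun B g x - \<mu>) = 0" using np Fx by simp
  have "quad_fun (A + \<sigma> *\<^sub>R B) (f + \<sigma> *\<^sub>R g) x \<le> quad_fun (A + \<sigma> *\<^sub>R B) (f + \<sigma> *\<^sub>R g) y" for y
  proof -
    have "quad_fun (A + \<sigma> *\<^sub>R B) (f + \<sigma> *\<^sub>R g) x = \<gamma> + \<sigma> * \<mu>"
      using cs Fx by (simp add: quad_comb algebra_simps)
    also have "\<gamma> \<le> quad_fun A f y + \<sigma> * (quad_fun B g y - \<mu>)" by (rule dual)
    then have "\<gamma> + \<sigma> * \<mu> \<le> quad_fun (A + \<sigma> *\<^sub>R B) (f + \<sigma> *\<^sub>R g) y"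
      by (simp add: quad_comb algebra_simps)
    finally show ?thesis .
  qed
  then have "(A + \<sigma> *\<^sub>R B) *v x = f + \<sigma> *\<^sub>R g" by (rule grad_zero[OF symM])
  then show ?thesis using cs by simp
qed

lemma radius_bound:
  fixes c a K r :: real
  assumes c0: "c > 0" and a0: "a \<ge> 0" and r0: "r \<ge> 0" and h: "c * r^2 - 2*a*r \<le> K"
  shows "r \<le> max 1 ((2*a + \<bar>K\<bar>)/c)"
proof (cases "r \<le> 1")
  case True then show ?thesis by simp
next
  case False
  then have r1: "r > 1" by simp
  have "c * r * r \<le> K + 2*a*r" using h by (simp add: power2_eq_square algebra_simps)
  also have "\<dots> \<le> \<bar>K\<bar> * r + 2*a*r"
  proof -
    have "K \<le> \<bar>K\<bar> * 1" by simp
    also have "\<dots> \<le> \<bar>K\<bar> * r" using r1 by (intro mult_left_mono) auto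
    finally show ?thesis by simp
  qed
  finally have "(c * r) * r \<le> (\<bar>K\<bar> + 2*a) * r" by (simp add: algebra_simps)
  then have "c * r \<le> \<bar>K\<bar> + 2*a" using r1 by simp
  then have "r \<le> (2*a + \<bar>K\<bar>)/c" using c0 by (simp add: pos_le_divide_eq algebra_simps)
  then show ?thesis by simp
qed

lemma cont_quad: "continuous_on UNIV (quad_fun M h)"
  unfolding quad_fun_def by (intro continuous_intros)

lemma attain_generic:
  fixes A B M0 :: "real^'n^'n" and f g h0 :: "real^'n"
  assumes symA: "symmetric_mat A" and symB: "symmetric_mat B"
    and sl: "quad_fun B g x0 \<le> \<mu>"
    and bdd: "bdd_below (quad_fun A f ` {x. quad_fun B g x \<le> \<mu>})"
    and sym0: "symmetric_mat M0" and ps0: "psd M0"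
    and inv: "\<And>n. M0 *v n = 0 \<Longrightarrow> A *v n = 0 \<and> B *v n = 0 \<and> f \<bullet> n = 0 \<and> g \<bullet> n = 0"
    and low: "\<And>y. quad_fun B g y \<le> \<mu> \<Longrightarrow> quad_fun M0 h0 y + c0 \<le> quad_fun A f y"
  shows "\<exists>x. quad_fun B g x \<le> \<mu> \<and>
              quad_fun A f x = (INF z\<in>{x. quad_fun B g x \<le> \<mu>}. quad_fun A f z)"
proof -
  let ?S = "{x. quad_fun B g x \<le> \<mu>}"
  let ?F = "quad_fun A f" and ?G = "quad_fun B g"
  define \<gamma> where "\<gamma> = (INF z\<in>?S. ?F z)"
  have Sne: "?S \<noteq> {}" using sl by blast
  define P where "P x = pinv M0 *v (M0 *v x)" for x
  have PN: "M0 *v (x - P x) = 0" for x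
    using pinv_facts(1)[OF sym0, of x] by (simp add: P_def matrix_vector_mult_diff_distrib)
  have PR: "\<exists>z. P x = M0 *v z" for x unfolding P_def by (rule pinv_facts(3)[OF sym0])
  have PF: "?F (P x) = ?F x" and PG: "?G (P x) = ?G x" for x
  proof -
    have e: "P x = x + (-1) *\<^sub>R (x - P x)" by simp
    have i: "A *v (x - P x) = 0" "B *v (x - P x) = 0" "f \<bullet> (x - P x) = 0" "g \<bullet> (x - P x) = 0"
      using inv[OF PN[of x]] by auto
    show "?F (P x) = ?F x" by (subst e, rule shift_inv[OF symA i(1) i(3)])
    show "?G (P x) = ?G x" by (subst e, rule shift_inv[OF symB i(2) i(4)])
  qed
  obtain c where c0: "c > 0" and co: "\<And>z. c * ((M0 *v z) \<bullet> (M0 *v z)) \<le> (M0 *v z) \<bullet> (M0 *v (M0 *v z))"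
    using coercive_range[OF sym0 ps0] by blast
  define Rb where "Rb = max 1 ((2*norm h0 + \<bar>\<gamma> + 1 - c0\<bar>)/c)"
  define T where "T = {y. (\<exists>z. y = M0 *v z) \<and> ?G y \<le> \<mu> \<and> ?F y \<le> \<gamma> + 1}"
  have Tb: "norm y \<le> Rb" if yT: "y \<in> T" for y
  proof -
    obtain z where yz: "y = M0 *v z" and Gy: "?G y \<le> \<mu>" and Fy: "?F y \<le> \<gamma> + 1" using yT by (auto simp: T_def)
    have "c * (norm y)^2 - 2 * norm h0 * norm y \<le> quad_fun M0 h0 y"
    proof -
      have "c * (norm y)^2 \<le> y \<bullet> (M0 *v y)" using co[of z] yz by (simp add: dot_square_norm)
      moreover have "h0 \<bullet> y \<le> norm h0 * norm y" by (rule norm_cauchy_schwarz)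
      ultimately show ?thesis by (simp add: quad_fun_def)
    qed
    also have "\<dots> \<le> \<gamma> + 1 - c0" using low[OF Gy] Fy by simp
    finally show ?thesis unfolding Rb_def by (intro radius_bound[OF c0]) auto
  qed
  have cT: "compact T"
  proof -
    have "bounded T" using Tb by (auto simp: bounded_iff)
    moreover have "closed T"
    proof -
      have "T = range (\<lambda>z. M0 *v z) \<inter> {y. ?G y \<le> \<mu>} \<inter> {y. ?F y \<le> \<gamma> + 1}" by (auto simp: T_def)
      moreover have "closed (range (\<lambda>z. M0 *v z))"
        by (intro closed_subspace linear_subspace_image subspace_UNIV matrix_vector_mul_linear)
      moreover have "closed {y. ?G y \<le> \<mu>}" by (intro closed_Collect_le cont_quad continuous_intros)
      moreover have "closed {y. ?F y \<le> \<gamma> + 1}" by (intro closed_Collect_le cont_quad continuous_intros)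
      ultimately show ?thesis by (metis closed_Int)
    qed
    ultimately show ?thesis by (simp add: compact_eq_bounded_closed)
  qed
  obtain x1 where x1S: "?G x1 \<le> \<mu>" and x1F: "?F x1 < \<gamma> + 1"
  proof -
    have "\<gamma> < \<gamma> + 1" by simp
    then have "\<exists>x\<in>?S. ?F x < \<gamma> + 1" unfolding \<gamma>_def using cINF_less_iff[OF Sne bdd] by blast
    then show ?thesis using that by blast
  qed
  have PT: "P x \<in> T" if "?G x \<le> \<mu>" "?F x \<le> \<gamma> + 1" for x
    using that PR[of x] PF[of x] PG[of x] by (auto simp: T_def)
  have Tne: "T \<noteq> {}" using PT[OF x1S] x1F by auto
  obtain ys where ysT: "ys \<in> T" and ysmin: "\<And>y. y \<in> T \<Longrightarrow> ?F ys \<le> ?F y"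
    using continuous_attains_inf[OF cT Tne continuous_on_subset[OF cont_quad]] by blast
  have ysS: "?G ys \<le> \<mu>" and ysF: "?F ys \<le> \<gamma> + 1" using ysT by (auto simp: T_def)
  have le: "?F ys \<le> ?F z" if zS: "?G z \<le> \<mu>" for z
  proof (cases "?F z \<le> \<gamma> + 1")
    case True
    then have "?F ys \<le> ?F (P z)" using ysmin PT[OF zS] by blast
    then show ?thesis using PF by simp
  next
    case False then show ?thesis using ysF by simp
  qed
  show ?thesis
  proof (intro exI conjI)
    show "?G ys \<le> \<mu>" by (rule ysS)
    show "?F ys = (INF z\<in>?S. ?F z)"
      by (rule cInf_eq_minimum[symmetric]) (use ysS le in auto)
  qed
qed

lemma Mvec: "(A + s *\<^sub>R B) *v v = A *v v + s *\<^sub>R (B *v (v::real^'n))"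
  by (simp add: matrix_vector_mult_add_rdistrib scaleR_matrix_vector_assoc[symmetric])

lemma Minner: "v \<bullet> ((A + s *\<^sub>R B) *v v) = v \<bullet> (A *v v) + s * (v \<bullet> (B *v (v::real^'n)))"
  by (simp add: Mvec inner_add_right)

lemma other_point:
  fixes A B :: "real^'n^'n" and f g :: "real^'n"
  assumes symA: "symmetric_mat A" and symB: "symmetric_mat B"
    and sl: "quad_fun B g x0 < \<mu>"
    and bdd: "bdd_below (quad_fun A f ` {x. quad_fun B g x \<le> \<mu>})"
    and s0: "\<sigma> \<ge> 0" and ps: "psd (A + \<sigma> *\<^sub>R B)"
    and dual: "\<And>y. (INF z\<in>{x. quad_fun B g x \<le> \<mu>}. quad_fun A f z) \<le> quad_fun A f y + \<sigma> * (quad_fun B g y - \<mu>)"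
    and ps': "psd (A + \<sigma>' *\<^sub>R B)" and ne: "\<sigma>' \<noteq> \<sigma>"
  shows "\<exists>x. quad_fun B g x \<le> \<mu> \<and>
              quad_fun A f x = (INF z\<in>{x. quad_fun B g x \<le> \<mu>}. quad_fun A f z)"
proof -
  let ?S = "{x. quad_fun B g x \<le> \<mu>}"
  let ?F = "quad_fun A f" and ?G = "quad_fun B g"
  define \<gamma> where "\<gamma> = (INF z\<in>?S. ?F z)"
  define M where "M = A + \<sigma> *\<^sub>R B"
  define h where "h = f + \<sigma> *\<^sub>R g"
  define M' where "M' = A + \<sigma>' *\<^sub>R B"
  have symM: "symmetric_mat M" unfolding M_def by (rule sym_comb[OF symA symB])
  have symM': "symmetric_mat M'" unfolding M'_def by (rule sym_comb[OF symA symB])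
  have psM: "psd M" using ps by (simp add: M_def)
  have psM': "psd M'" using ps' by (simp add: M'_def)
  have gl: "\<gamma> \<le> ?F z" if "?G z \<le> \<mu>" for z
    unfolding \<gamma>_def by (rule cINF_lower[OF bdd]) (use that in auto)
  define xh where "xh = pinv M *v h"
  have Mxh: "M *v xh = h"
  proof -
    have "\<gamma> + \<sigma> * \<mu> \<le> quad_fun M h y" for y
      using dual[of y] unfolding \<gamma>_def[symmetric] M_def h_def by (simp add: quad_comb algebra_simps)
    then show ?thesis unfolding xh_def by (rule range_from_bdd[OF symM])
  qed
  show ?thesis
  proof (cases "\<exists>w. A *v w = 0 \<and> B *v w = 0 \<and> g \<bullet> w \<noteq> 0")
    case True
    then obtain w where Aw: "A *v w = 0" and Bw: "B *v w = 0" and gw: "g \<bullet> w \<noteq> 0" by blast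
    define t where "t = (?G xh - \<mu>) / (2 * (g \<bullet> w))"
    define x where "x = xh + t *\<^sub>R w"
    have "(B *v xh) \<bullet> w = 0" using sym_inner[OF symB, of xh w] Bw by simp
    then have "?G x = ?G xh - 2 * t * (g \<bullet> w)"
      using quad_add[OF symB, of g xh t w] Bw by (simp add: x_def inner_diff_left)
    also have "\<dots> = \<mu>" using gw by (simp add: t_def field_simps)
    finally have Gx: "?G x = \<mu>" .
    have Mw: "M *v w = 0" using Aw Bw by (simp add: M_def Mvec)
    have Mx: "M *v x = h" using Mxh Mw by (simp add: x_def matrix_vector_right_distrib matrix_vector_mult_scaleR)
    show ?thesis
      by (rule KKT_attain[OF symA symB bdd ps s0 Mx[unfolded M_def h_def]]) (use Gx in auto)
  next
    case False
    then have nog: "g \<bullet> w = 0" if "A *v w = 0" "B *v w = 0" for w using that by blast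
    have nof: "f \<bullet> w = 0" if Aw: "A *v w = 0" and Bw: "B *v w = 0" for w
    proof -
      have "\<gamma> - ?F x0 \<le> -2*t*(f \<bullet> w)" for t
      proof -
        have "?G (x0 + t *\<^sub>R w) = ?G x0" by (rule shift_inv[OF symB Bw nog[OF Aw Bw]])
        then have "\<gamma> \<le> ?F (x0 + t *\<^sub>R w)" using sl by (intro gl) simp
        moreover have "(A *v x0) \<bullet> w = 0" using sym_inner[OF symA, of x0 w] Aw by simp
        then have "?F (x0 + t *\<^sub>R w) = ?F x0 - 2*t*(f \<bullet> w)"
          using quad_add[OF symA, of f x0 t w] Aw by (simp add: inner_diff_left)
        ultimately show ?thesis by simp
      qed
      then show ?thesis by (rule lin_bdd_zero)
    qed
    show ?thesis
    proof (cases "\<sigma> = 0 \<and> \<sigma>' < 0")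
      case True
      then have sz: "\<sigma> = 0" and sn: "\<sigma>' < 0" by auto
      have MA: "M = A" "h = f" using sz by (simp_all add: M_def h_def)
      show ?thesis
      proof (cases "\<exists>v. A *v v = 0 \<and> v \<bullet> (B *v v) < 0")
        case True
        then obtain v where Av: "A *v v = 0" and vB: "v \<bullet> (B *v v) < 0" by blast
        have "\<exists>T>0. ?G (xh + T *\<^sub>R v) \<le> \<mu>"
        proof (rule ccontr)
          assume "\<not> ?thesis"
          then have nT: "\<mu> < ?G (xh + T *\<^sub>R v)" if "T > 0" for T using that by auto
          have "0 \<le> (?G xh - \<mu>) + (2*((B *v xh - g) \<bullet> v))*T + (v \<bullet> (B *v v))*T^2" if T0: "T > 0" for T
          proof -
            have "?G (xh + T *\<^sub>R v) = ?G xh + 2*T*((B *v xh - g) \<bullet> v) + T^2 * (v \<bullet> (B *v v))"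
              by (rule quad_add[OF symB])
            then show ?thesis using nT[OF T0] by (simp add: algebra_simps)
          qed
          then have "0 \<le> v \<bullet> (B *v v)" by (rule quad_pos_lead)
          then show False using vB by simp
        qed
        then obtain T where GT: "?G (xh + T *\<^sub>R v) \<le> \<mu>" by blast
        have Ax: "(A + \<sigma> *\<^sub>R B) *v (xh + T *\<^sub>R v) = f + \<sigma> *\<^sub>R g"
          using Mxh Av MA by (simp add: matrix_vector_right_distrib matrix_vector_mult_scaleR sz)
        show ?thesis
          by (rule KKT_attain[OF symA symB bdd ps s0 Ax GT]) (simp add: sz)
      next
        case False
        then have Bpos: "0 \<le> v \<bullet> (B *v v)" if "A *v v = 0" for v using that by fastforce
        have inv: "A *v n = 0 \<and> B *v n = 0 \<and> f \<bullet> n = 0 \<and> g \<bullet> n = 0" if An: "A *v n = 0" for n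
        proof -
          have "0 \<le> n \<bullet> (M' *v n)" using psM' by (simp add: psd_def)
          also have "n \<bullet> (M' *v n) = \<sigma>' * (n \<bullet> (B *v n))" using An by (simp add: M'_def Minner)
          finally have "0 \<le> \<sigma>' * (n \<bullet> (B *v n))" .
          then have "n \<bullet> (B *v n) \<le> 0" using sn by (simp add: zero_le_mult_iff)
          then have "n \<bullet> (B *v n) = 0" using Bpos[OF An] by simp
          then have "n \<bullet> (M' *v n) = 0" using An by (simp add: M'_def Minner)
          then have "M' *v n = 0" by (rule psd_zero[OF symM' psM'])
          then have "\<sigma>' *\<^sub>R (B *v n) = 0" using An by (simp add: M'_def Mvec)
          then have Bn: "B *v n = 0" using sn by simp
          show ?thesis using An Bn nog[OF An Bn] nof[OF An Bn] by simp
        qed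
        have psA: "psd A" using psM MA by simp
        show ?thesis
          by (rule attain_generic[OF symA symB _ bdd symA psA, of x0 f 0])
             (use sl inv in auto)
      qed
    next
      case False
      define \<sigma>m where "\<sigma>m = (\<sigma> + max \<sigma>' 0) / 2"
      have sm0: "\<sigma>m > 0" using False ne s0 by (auto simp: \<sigma>m_def max_def)
      define a where "a = (\<sigma>m - \<sigma>') / (\<sigma> - \<sigma>')"
      define b where "b = (\<sigma> - \<sigma>m) / (\<sigma> - \<sigma>')"
      have d0: "\<sigma> - \<sigma>' \<noteq> 0" using ne by simp
      have btw: "(\<sigma> < \<sigma>m \<and> \<sigma>m < \<sigma>') \<or> (\<sigma>' < \<sigma>m \<and> \<sigma>m < \<sigma>)"
        using False ne s0 by (auto simp: \<sigma>m_def max_def)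
      have a0: "a > 0" and b0: "b > 0"
        using btw by (auto simp: a_def b_def divide_pos_pos divide_neg_neg)
      have ab1: "a + b = 1"
      proof -
        have "a + b = ((\<sigma>m - \<sigma>') + (\<sigma> - \<sigma>m)) / (\<sigma> - \<sigma>')"
          unfolding a_def b_def by (rule add_divide_distrib[symmetric])
        also have "(\<sigma>m - \<sigma>') + (\<sigma> - \<sigma>m) = \<sigma> - \<sigma>'" by simp
        finally show ?thesis using d0 by simp
      qed
      have ab2: "a * \<sigma> + b * \<sigma>' = \<sigma>m"
      proof -
        have "a * \<sigma> + b * \<sigma>' = ((\<sigma>m - \<sigma>') * \<sigma>) / (\<sigma> - \<sigma>') + ((\<sigma> - \<sigma>m) * \<sigma>') / (\<sigma> - \<sigma>')"
          unfolding a_def b_def by simp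
        also have "\<dots> = ((\<sigma>m - \<sigma>') * \<sigma> + (\<sigma> - \<sigma>m) * \<sigma>') / (\<sigma> - \<sigma>')"
          by (rule add_divide_distrib[symmetric])
        also have "(\<sigma>m - \<sigma>') * \<sigma> + (\<sigma> - \<sigma>m) * \<sigma>' = \<sigma>m * (\<sigma> - \<sigma>')" by (simp add: algebra_simps)
        finally show ?thesis using d0 by simp
      qed
      define M0 where "M0 = A + \<sigma>m *\<^sub>R B"
      have sym0: "symmetric_mat M0" unfolding M0_def by (rule sym_comb[OF symA symB])
      have comb: "v \<bullet> (M0 *v v) = a * (v \<bullet> (M *v v)) + b * (v \<bullet> (M' *v v))" for v
      proof -
        have "a * (v \<bullet> (A *v v) + \<sigma> * (v \<bullet> (B *v v))) + b * (v \<bullet> (A *v v) + \<sigma>' * (v \<bullet> (B *v v)))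
              = (a + b) * (v \<bullet> (A *v v)) + (a * \<sigma> + b * \<sigma>') * (v \<bullet> (B *v v))"
          by (simp add: algebra_simps)
        then show ?thesis using ab1 ab2 by (simp add: M0_def M_def M'_def Minner)
      qed
      have ps0: "psd M0" unfolding psd_def
      proof
        fix v
        have "0 \<le> v \<bullet> (M *v v)" "0 \<le> v \<bullet> (M' *v v)" using psM psM' by (auto simp: psd_def)
        then show "0 \<le> v \<bullet> (M0 *v v)" using comb[of v] a0 b0 by simp
      qed
      have inv: "A *v n = 0 \<and> B *v n = 0 \<and> f \<bullet> n = 0 \<and> g \<bullet> n = 0" if Mn: "M0 *v n = 0" for n
      proof -
        have p1: "0 \<le> n \<bullet> (M *v n)" "0 \<le> n \<bullet> (M' *v n)" using psM psM' by (auto simp: psd_def)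
        have "a * (n \<bullet> (M *v n)) + b * (n \<bullet> (M' *v n)) = 0" using comb[of n] Mn by simp
        moreover have "0 \<le> a * (n \<bullet> (M *v n))" "0 \<le> b * (n \<bullet> (M' *v n))" using p1 a0 b0 by auto
        ultimately have "a * (n \<bullet> (M *v n)) = 0" "b * (n \<bullet> (M' *v n)) = 0" by linarith+
        then have "n \<bullet> (M *v n) = 0" "n \<bullet> (M' *v n) = 0" using a0 b0 by auto
        then have z1: "M *v n = 0" and z2: "M' *v n = 0"
          using psd_zero[OF symM psM] psd_zero[OF symM' psM'] by auto
        have "(\<sigma> - \<sigma>') *\<^sub>R (B *v n) = M *v n - M' *v n"
          unfolding M_def M'_def Mvec by (simp add: scaleR_diff_left)
        then have "(\<sigma> - \<sigma>') *\<^sub>R (B *v n) = 0" using z1 z2 by simp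
        then have Bn: "B *v n = 0" using d0 by simp
        have An: "A *v n = 0" using z1 Bn by (simp add: M_def Mvec)
        show ?thesis using An Bn nog[OF An Bn] nof[OF An Bn] by simp
      qed
      have low: "quad_fun M0 (f + \<sigma>m *\<^sub>R g) y + (- \<sigma>m * \<mu>) \<le> ?F y" if Gy: "?G y \<le> \<mu>" for y
      proof -
        have "\<sigma>m * (?G y - \<mu>) \<le> 0" using sm0 Gy by (simp add: mult_nonneg_nonpos)
        then show ?thesis by (simp add: M0_def quad_comb algebra_simps)
      qed
      show ?thesis
        by (rule attain_generic[OF symA symB _ bdd sym0 ps0 inv low, of x0]) (use sl in auto)
    qed
  qed
qed

theorem theorem7:
  fixes A B :: "real^'n^'n" and f g :: "real^'n" and \<mu> :: real
  assumes "symmetric_mat A" and "symmetric_mat B"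
    and slater: "\<exists>x0. quad_fun B g x0 < \<mu>"
    and finite_val: "bdd_below (quad_fun A f ` {x. quad_fun B g x \<le> \<mu>})"
  shows "(\<not> (\<exists>x. quad_fun B g x \<le> \<mu> \<and>
              quad_fun A f x = (INF z\<in>{x. quad_fun B g x \<le> \<mu>}. quad_fun A f z)))
     \<longleftrightarrow>
     (\<exists>\<sigma>s. I_psd A B = {\<sigma>s} \<and> \<sigma>s \<ge> 0 \<and>
        (if \<sigma>s > 0 then
           \<not> (\<exists>v\<in>null_space (A + \<sigma>s *\<^sub>R B).
                quad_fun B g (pinv (A + \<sigma>s *\<^sub>R B) *v (f + \<sigma>s *\<^sub>R g) + v) = \<mu>)
         else
           \<not> (\<exists>v\<in>null_space A. quad_fun B g (pinv A *v f + v) \<le> \<mu>)))"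
proof -
  note symA = assms(1) and symB = assms(2)
  let ?S = "{x. quad_fun B g x \<le> \<mu>}"
  let ?F = "quad_fun A f" and ?G = "quad_fun B g"
  define \<gamma> where "\<gamma> = (INF z\<in>?S. ?F z)"
  let ?att = "\<exists>x. ?G x \<le> \<mu> \<and> ?F x = (INF z\<in>?S. ?F z)"
  obtain x0 where sl: "?G x0 < \<mu>" using slater by blast
  have gl: "\<gamma> \<le> ?F z" if "?G z \<le> \<mu>" for z
    unfolding \<gamma>_def by (rule cINF_lower[OF finite_val]) (use that in auto)
  obtain \<sigma> where s0: "\<sigma> \<ge> 0" and ps: "psd (A + \<sigma> *\<^sub>R B)"
    and dual: "\<And>y. \<gamma> \<le> ?F y + \<sigma> * (?G y - \<mu>)"
    using S_lemma[OF sl gl] by blast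
  define M where "M = A + \<sigma> *\<^sub>R B"
  define h where "h = f + \<sigma> *\<^sub>R g"
  have symM: "symmetric_mat M" unfolding M_def by (rule sym_comb[OF symA symB])
  have sI: "\<sigma> \<in> I_psd A B" using ps by (simp add: I_psd_def)
  have Mxh: "M *v (pinv M *v h) = h"
  proof -
    have "\<gamma> + \<sigma> * \<mu> \<le> quad_fun M h y" for y
      using dual[of y] unfolding M_def h_def by (simp add: quad_comb algebra_simps)
    then show ?thesis by (rule range_from_bdd[OF symM])
  qed
  have kkt: ?att if Mx: "M *v x = h" and Gx: "?G x \<le> \<mu>" and cs: "\<sigma> * (?G x - \<mu>) = 0" for x
    by (rule KKT_attain[OF symA symB finite_val ps s0 Mx[unfolded M_def h_def] Gx cs])
  show ?thesis
  proof
    assume na: "\<not> ?att"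
    have single: "I_psd A B = {\<sigma>}"
    proof
      show "I_psd A B \<subseteq> {\<sigma>}"
      proof
        fix \<sigma>' assume "\<sigma>' \<in> I_psd A B"
        then have ps': "psd (A + \<sigma>' *\<^sub>R B)" by (simp add: I_psd_def)
        show "\<sigma>' \<in> {\<sigma>}"
        proof (rule ccontr)
          assume "\<sigma>' \<notin> {\<sigma>}"
          then have "\<sigma>' \<noteq> \<sigma>" by simp
          have ?att
            by (rule other_point[OF symA symB sl finite_val s0 ps _ ps' \<open>\<sigma>' \<noteq> \<sigma>\<close>])
               (use dual in \<open>simp add: \<gamma>_def\<close>)
          with na show False by blast
        qed
      qed
      show "{\<sigma>} \<subseteq> I_psd A B" using sI by simp
    qed
    have cond: "(if \<sigma> > 0 then
           \<not> (\<exists>v\<in>null_space (A + \<sigma> *\<^sub>R B).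
                quad_fun B g (pinv (A + \<sigma> *\<^sub>R B) *v (f + \<sigma> *\<^sub>R g) + v) = \<mu>)
         else
           \<not> (\<exists>v\<in>null_space A. quad_fun B g (pinv A *v f + v) \<le> \<mu>))"
    proof (cases "\<sigma> > 0")
      case True
      have "\<not> (\<exists>v\<in>null_space M. ?G (pinv M *v h + v) = \<mu>)"
      proof
        assume "\<exists>v\<in>null_space M. ?G (pinv M *v h + v) = \<mu>"
        then obtain v where vN: "M *v v = 0" and Gv: "?G (pinv M *v h + v) = \<mu>"
          by (auto simp: null_space_def)
        have "M *v (pinv M *v h + v) = h" using Mxh vN by (simp add: matrix_vector_right_distrib)
        then have ?att using kkt Gv by simp
        with na show False by blast
      qed
      then show ?thesis using True by (simp add: M_def h_def)
    next
      case False
      then have sz: "\<sigma> = 0" using s0 by simp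
      have MA: "M = A" "h = f" using sz by (simp_all add: M_def h_def)
      have "\<not> (\<exists>v\<in>null_space A. ?G (pinv A *v f + v) \<le> \<mu>)"
      proof
        assume "\<exists>v\<in>null_space A. ?G (pinv A *v f + v) \<le> \<mu>"
        then obtain v where vN: "A *v v = 0" and Gv: "?G (pinv A *v f + v) \<le> \<mu>"
          by (auto simp: null_space_def)
        have "M *v (pinv A *v f + v) = h" using Mxh vN MA by (simp add: matrix_vector_right_distrib)
        then have ?att using kkt Gv sz by simp
        with na show False by blast
      qed
      then show ?thesis using False by simp
    qed
    show "\<exists>\<sigma>s. I_psd A B = {\<sigma>s} \<and> \<sigma>s \<ge> 0 \<and>
        (if \<sigma>s > 0 then
           \<not> (\<exists>v\<in>null_space (A + \<sigma>s *\<^sub>R B).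
                quad_fun B g (pinv (A + \<sigma>s *\<^sub>R B) *v (f + \<sigma>s *\<^sub>R g) + v) = \<mu>)
         else
           \<not> (\<exists>v\<in>null_space A. quad_fun B g (pinv A *v f + v) \<le> \<mu>))"
      using single s0 cond by blast
  next
    assume "\<exists>\<sigma>s. I_psd A B = {\<sigma>s} \<and> \<sigma>s \<ge> 0 \<and>
        (if \<sigma>s > 0 then
           \<not> (\<exists>v\<in>null_space (A + \<sigma>s *\<^sub>R B).
                quad_fun B g (pinv (A + \<sigma>s *\<^sub>R B) *v (f + \<sigma>s *\<^sub>R g) + v) = \<mu>)
         else
           \<not> (\<exists>v\<in>null_space A. quad_fun B g (pinv A *v f + v) \<le> \<mu>))"
    then obtain \<sigma>s where I: "I_psd A B = {\<sigma>s}" and c: "(if \<sigma>s > 0 then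
           \<not> (\<exists>v\<in>null_space (A + \<sigma>s *\<^sub>R B).
                quad_fun B g (pinv (A + \<sigma>s *\<^sub>R B) *v (f + \<sigma>s *\<^sub>R g) + v) = \<mu>)
         else
           \<not> (\<exists>v\<in>null_space A. quad_fun B g (pinv A *v f + v) \<le> \<mu>))" by blast
    have ss: "\<sigma>s = \<sigma>" using I sI by simp
    show "\<not> ?att"
    proof
      assume ?att
      then obtain x where Gx: "?G x \<le> \<mu>" and Fx: "?F x = \<gamma>" unfolding \<gamma>_def by blast
      have k: "M *v x = h \<and> \<sigma> * (?G x - \<mu>) = 0"
        using attain_KKT[OF symA symB s0 dual Gx Fx] by (simp add: M_def h_def)
      define v where "v = x - pinv M *v h"
      have vN: "M *v v = 0" using k Mxh by (simp add: v_def matrix_vector_mult_diff_distrib)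
      have xv: "x = pinv M *v h + v" by (simp add: v_def)
      show False
      proof (cases "\<sigma> > 0")
        case True
        then have "?G x = \<mu>" using k by simp
        then have "\<exists>v\<in>null_space M. ?G (pinv M *v h + v) = \<mu>"
          using vN xv by (auto simp: null_space_def)
        then show False using c True ss by (simp add: M_def h_def)
      next
        case False
        then have sz: "\<sigma> = 0" using s0 by simp
        have MA: "M = A" "h = f" using sz by (simp_all add: M_def h_def)
        have "\<exists>v\<in>null_space A. ?G (pinv A *v f + v) \<le> \<mu>"
          using vN xv Gx MA by (auto simp: null_space_def)
        then show False using c False ss by simp
      qed
    qed
  qed
qed

end
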